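(* Let $L$ be the regular language over $\{0,1\}$ given by the regular expression \[ L = 1 + 011 + 110 + 11(01)^*\Bigl[00 + 00(11)^+ + (11)^+00 + (11)^*1011 + 1101(11)^*\Bigr](10)^*11 + 11(01)^*(11)^*01 + 10(11)^*(10)^*11 . \] Then a one-dimensional Peg Solitaire configuration $w\in\{0,1\}^*$ can be reduced to a configuration with exactly one peg if and only if $w \in 0^*L0^*$. In particular, the set of configurations reducible to a single peg is a regular language.
   Context: One-dimensional Peg Solitaire: a configuration is a finite word $w=c_0c_1\cdots c_{n-1}\in\{0,1\}^*$, describing a row of $n$ consecutive sites, where $c_i=1$ means site $i$ holds a peg and $c_i=0$ means site $i$ is a hole. The board consists exactly of these $n$ sites (no sites outside the word may be used). A move (hop) takes three consecutive sites $i,i+1,i+2$ (all within the board) such that one end site and the middle site hold pegs and the other end site is a hole, moves the end peg to the hole, and removes the peg from the middle site (i.e. $110\to001$ or $011\to100$ on those three sites). A configuration can be reduced to one peg if some sequence of hops leads to a configuration with exactly one peg. In regular expressions, $+$ denotes union, $u^*$ denotes zero or more repetitions of $u$, $u^+=uu^*$, and concatenation is juxtaposition. *)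

theory Defs
  imports Main
begin

text \<open>Configurations: words over {0,1}, encoded as bool lists (True = peg = 1, False = hole = 0).\<close>

definition hop :: "bool list \<Rightarrow> bool list \<Rightarrow> bool" where
  "hop w w' \<longleftrightarrow> (\<exists>u v.
      (w = u @ [True, True, False] @ v \<and> w' = u @ [False, False, True] @ v) \<or>
      (w = u @ [False, True, True] @ v \<and> w' = u @ [True, False, False] @ v))"

definition pegs :: "bool list \<Rightarrow> nat" where
  "pegs w = length (filter id w)"

definition reducible_to_one :: "bool list \<Rightarrow> bool" where
  "reducible_to_one w \<longleftrightarrow> (\<exists>w'. hop\<^sup>*\<^sup>* w w' \<and> pegs w' = 1)"

definition conc :: "'a list set \<Rightarrow> 'a list set \<Rightarrow> 'a list set" (infixr "\<cdot>\<cdot>" 75) where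
  "A \<cdot>\<cdot> B = {u @ v | u v. u \<in> A \<and> v \<in> B}"

fun lpow :: "'a list set \<Rightarrow> nat \<Rightarrow> 'a list set" where
  "lpow A 0 = {[]}"
| "lpow A (Suc n) = A \<cdot>\<cdot> lpow A n"

definition lstar :: "'a list set \<Rightarrow> 'a list set" where
  "lstar A = (\<Union>n. lpow A n)"

definition lplus :: "'a list set \<Rightarrow> 'a list set" where
  "lplus A = A \<cdot>\<cdot> lstar A"

definition wd :: "string \<Rightarrow> bool list" where
  "wd s = map (\<lambda>c. c = CHR ''1'') s"

definition lit :: "string \<Rightarrow> bool list set" where
  "lit s = {wd s}"

definition PegL :: "bool list set" where
  "PegL =
     lit ''1'' \<union> lit ''011'' \<union> lit ''110''
   \<union> (lit ''11'' \<cdot>\<cdot> lstar (lit ''01'') \<cdot>\<cdot>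
        (lit ''00'' \<union> (lit ''00'' \<cdot>\<cdot> lplus (lit ''11'')) \<union> (lplus (lit ''11'') \<cdot>\<cdot> lit ''00'')
         \<union> (lstar (lit ''11'') \<cdot>\<cdot> lit ''1011'') \<union> (lit ''1101'' \<cdot>\<cdot> lstar (lit ''11'')))
        \<cdot>\<cdot> lstar (lit ''10'') \<cdot>\<cdot> lit ''11'')
   \<union> (lit ''11'' \<cdot>\<cdot> lstar (lit ''01'') \<cdot>\<cdot> lstar (lit ''11'') \<cdot>\<cdot> lit ''01'')
   \<union> (lit ''10'' \<cdot>\<cdot> lstar (lit ''11'') \<cdot>\<cdot> lstar (lit ''10'') \<cdot>\<cdot> lit ''11'')"

end

theory Submission imports Defs begin

datatype rexp = Zero | One | Lit "bool list" | Plus rexp rexp | Times rexp rexp | Star rexp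

fun lang :: "rexp \<Rightarrow> bool list set" where
  "lang Zero = {}"
| "lang One = {[]}"
| "lang (Lit w) = {w}"
| "lang (Plus r s) = lang r \<union> lang s"
| "lang (Times r s) = lang r \<cdot>\<cdot> lang s"
| "lang (Star r) = lstar (lang r)"

fun nullable :: "rexp \<Rightarrow> bool" where
  "nullable Zero = False"
| "nullable One = True"
| "nullable (Lit w) = (w = [])"
| "nullable (Plus r s) = (nullable r \<or> nullable s)"
| "nullable (Times r s) = (nullable r \<and> nullable s)"
| "nullable (Star r) = True"

fun summands :: "rexp \<Rightarrow> rexp list" where
  "summands (Plus r s) = r # summands s"
| "summands r = [r]"

fun plus :: "rexp \<Rightarrow> rexp \<Rightarrow> rexp" where
  "plus Zero s = s"
| "plus (Plus r1 r2) s = (if s = Zero then Plus r1 r2 else plus r1 (plus r2 s))"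
| "plus r s = (if s = Zero then r else if r \<in> set (summands s) then s else Plus r s)"

fun times :: "rexp \<Rightarrow> rexp \<Rightarrow> rexp" where
  "times Zero s = Zero"
| "times One s = s"
| "times (Lit w) s = (if s = Zero then Zero else if w = [] then s else if s = One then Lit w else Times (Lit w) s)"
| "times (Times r1 r2) s = (if s = Zero then Zero else if s = One then Times r1 r2 else times r1 (times r2 s))"
| "times r s = (if s = Zero then Zero else if s = One then r else Times r s)"

fun deriv :: "bool \<Rightarrow> rexp \<Rightarrow> rexp" where
  "deriv a Zero = Zero"
| "deriv a One = Zero"
| "deriv a (Lit w) = (case w of [] \<Rightarrow> Zero | b # v \<Rightarrow> if a = b then Lit v else Zero)"
| "deriv a (Plus r s) = plus (deriv a r) (deriv a s)"
| "deriv a (Times r s) = (if nullable r then plus (times (deriv a r) s) (deriv a s) else times (deriv a r) s)"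
| "deriv a (Star r) = times (deriv a r) (Star r)"


datatype st = Q0 | Q1 | Q2 | Q3 | Q4 | Q5 | Q6 | Q7 | Q8 | Q9 | Q10 | Q11 | Q12 | Q13 | Q14 | Q15 | Q16 | Q17 | Q18 | Q19 | Q20 | Q21 | Q22 | Q23 | Q24 | Q25 | Q26

datatype nst = Pre st | M1 bool st | M2 bool st | Post st

definition R0 :: rexp where "R0 = Times (Star (Lit [False])) (Times (Plus (Plus (Plus (Plus (Plus (Lit [True]) (Lit [False, True, True])) (Lit [True, True, False])) (Times (Lit [True, True]) (Times (Star (Lit [False, True])) (Times (Plus (Plus (Plus (Plus (Lit [False, False]) (Times (Lit [False, False]) (Times (Lit [True, True]) (Star (Lit [True, True]))))) (Times (Times (Lit [True, True]) (Star (Lit [True, True]))) (Lit [False, False]))) (Times (Star (Lit [True, True])) (Lit [True, False, True, True]))) (Times (Lit [True, True, False, True]) (Star (Lit [True, True])))) (Times (Star (Lit [True, False])) (Lit [True, True])))))) (Times (Lit [True, True]) (Times (Star (Lit [False, True])) (Times (Star (Lit [True, True])) (Lit [False, True]))))) (Times (Lit [True, False]) (Times (Star (Lit [True, True])) (Times (Star (Lit [True, False])) (Lit [True, True]))))) (Star (Lit [False])))"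

fun rs :: "st \<Rightarrow> rexp" where
  "rs Q0 = Times (Star (Lit [False])) (Times (Plus (Plus (Plus (Plus (Plus (Lit [True]) (Lit [False, True, True])) (Lit [True, True, False])) (Times (Lit [True, True]) (Times (Star (Lit [False, True])) (Times (Plus (Plus (Plus (Plus (Lit [False, False]) (Times (Lit [False, False]) (Times (Lit [True, True]) (Star (Lit [True, True]))))) (Times (Times (Lit [True, True]) (Star (Lit [True, True]))) (Lit [False, False]))) (Times (Star (Lit [True, True])) (Lit [True, False, True, True]))) (Times (Lit [True, True, False, True]) (Star (Lit [True, True])))) (Times (Star (Lit [True, False])) (Lit [True, True])))))) (Times (Lit [True, True]) (Times (Star (Lit [False, True])) (Times (Star (Lit [True, True])) (Lit [False, True]))))) (Times (Lit [True, False]) (Times (Star (Lit [True, True])) (Times (Star (Lit [True, False])) (Lit [True, True]))))) (Star (Lit [False])))"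
| "rs Q1 = Plus (Times (Star (Lit [False])) (Times (Plus (Plus (Plus (Plus (Plus (Lit [True]) (Lit [False, True, True])) (Lit [True, True, False])) (Times (Lit [True, True]) (Times (Star (Lit [False, True])) (Times (Plus (Plus (Plus (Plus (Lit [False, False]) (Times (Lit [False, False]) (Times (Lit [True, True]) (Star (Lit [True, True]))))) (Times (Times (Lit [True, True]) (Star (Lit [True, True]))) (Lit [False, False]))) (Times (Star (Lit [True, True])) (Lit [True, False, True, True]))) (Times (Lit [True, True, False, True]) (Star (Lit [True, True])))) (Times (Star (Lit [True, False])) (Lit [True, True])))))) (Times (Lit [True, True]) (Times (Star (Lit [False, True])) (Times (Star (Lit [True, True])) (Lit [False, True]))))) (Times (Lit [True, False]) (Times (Star (Lit [True, True])) (Times (Star (Lit [True, False])) (Lit [True, True]))))) (Star (Lit [False])))) (Times (Lit [True, True]) (Star (Lit [False])))"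
| "rs Q2 = Times (Plus (Lit []) (Plus (Lit [True, False]) (Plus (Times (Lit [True]) (Times (Star (Lit [False, True])) (Times (Plus (Plus (Plus (Plus (Lit [False, False]) (Times (Lit [False, False]) (Times (Lit [True, True]) (Star (Lit [True, True]))))) (Times (Times (Lit [True, True]) (Star (Lit [True, True]))) (Lit [False, False]))) (Times (Star (Lit [True, True])) (Lit [True, False, True, True]))) (Times (Lit [True, True, False, True]) (Star (Lit [True, True])))) (Times (Star (Lit [True, False])) (Lit [True, True]))))) (Plus (Times (Lit [True]) (Times (Star (Lit [False, True])) (Times (Star (Lit [True, True])) (Lit [False, True])))) (Times (Lit [False]) (Times (Star (Lit [True, True])) (Times (Star (Lit [True, False])) (Lit [True, True])))))))) (Star (Lit [False]))"
| "rs Q3 = Plus (Times (Plus (Lit []) (Plus (Lit [True, False]) (Plus (Times (Lit [True]) (Times (Star (Lit [False, True])) (Times (Plus (Plus (Plus (Plus (Lit [False, False]) (Times (Lit [False, False]) (Times (Lit [True, True]) (Star (Lit [True, True]))))) (Times (Times (Lit [True, True]) (Star (Lit [True, True]))) (Lit [False, False]))) (Times (Star (Lit [True, True])) (Lit [True, False, True, True]))) (Times (Lit [True, True, False, True]) (Star (Lit [True, True])))) (Times (Star (Lit [True, False])) (Lit [True, True]))))) (Plus (Times (Lit [True]) (Times (Star (Lit [False, True])) (Times (Star (Lit [True, True])) (Lit [False, True])))) (Times (Lit [False]) (Times (Star (Lit [True, True])) (Times (Star (Lit [True, False])) (Lit [True, True])))))))) (Star (Lit [False]))) (Times (Lit [True])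 (Star (Lit [False])))"
| "rs Q4 = Plus (Times (Star (Lit [True, True])) (Times (Star (Lit [True, False])) (Times (Lit [True, True]) (Star (Lit [False]))))) (Star (Lit [False]))"
| "rs Q5 = Times (Plus (Lit [False]) (Plus (Times (Star (Lit [False, True])) (Times (Plus (Plus (Plus (Plus (Lit [False, False]) (Times (Lit [False, False]) (Times (Lit [True, True]) (Star (Lit [True, True]))))) (Times (Times (Lit [True, True]) (Star (Lit [True, True]))) (Lit [False, False]))) (Times (Star (Lit [True, True])) (Lit [True, False, True, True]))) (Times (Lit [True, True, False, True]) (Star (Lit [True, True])))) (Times (Star (Lit [True, False])) (Lit [True, True])))) (Times (Star (Lit [False, True])) (Times (Star (Lit [True, True])) (Lit [False, True]))))) (Star (Lit [False]))"
| "rs Q6 = Plus (Times (Plus (Lit [False]) (Plus (Times (Star (Lit [False, True])) (Times (Plus (Plus (Plus (Plus (Lit [False, False]) (Times (Lit [False, False]) (Times (Lit [True, True]) (Star (Lit [True, True]))))) (Times (Times (Lit [True, True]) (Star (Lit [True, True]))) (Lit [False, False]))) (Times (Star (Lit [True, True])) (Lit [True, False, True, True]))) (Times (Lit [True, True, False, True]) (Star (Lit [True, True])))) (Times (Star (Lit [True, False])) (Lit [True, True])))) (Times (Star (Lit [False, True])) (Times (Star (Lit [True, True])) (Lit [False, True]))))) (Star (Lit [False]))) (Star (Lit [False]))"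
| "rs Q7 = Star (Lit [False])"
| "rs Q8 = Plus (Times (Lit [True]) (Times (Star (Lit [True, True])) (Times (Star (Lit [True, False])) (Times (Lit [True, True]) (Star (Lit [False])))))) (Plus (Times (Lit [False]) (Times (Star (Lit [True, False])) (Times (Lit [True, True]) (Star (Lit [False]))))) (Times (Lit [True]) (Star (Lit [False]))))"
| "rs Q9 = Times (Plus (Lit []) (Plus (Times (Lit [True]) (Times (Star (Lit [False, True])) (Times (Plus (Plus (Plus (Plus (Lit [False, False]) (Times (Lit [False, False]) (Times (Lit [True, True]) (Star (Lit [True, True]))))) (Times (Times (Lit [True, True]) (Star (Lit [True, True]))) (Lit [False, False]))) (Times (Star (Lit [True, True])) (Lit [True, False, True, True]))) (Times (Lit [True, True, False, True]) (Star (Lit [True, True])))) (Times (Star (Lit [True, False])) (Lit [True, True]))))) (Plus (Times (Plus (Lit [False]) (Times (Lit [False]) (Times (Lit [True, True]) (Star (Lit [True, True]))))) (Times (Star (Lit [True, False])) (Lit [True, True]))) (Plus (Times (Lit [True]) (Times (Star (Lit [False, True])) (Times (Star (Lit [True, True])) (Lit [False, True])))) (Lit [True]))))) (Star (Lit [False]))"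
| "rs Q10 = Times (Plus (Times (Plus (Times (Lit [True]) (Times (Star (Lit [True, True])) (Lit [False, False]))) (Plus (Times (Lit [True]) (Times (Star (Lit [True, True])) (Lit [True, False, True, True]))) (Plus (Lit [False, True, True]) (Times (Lit [True, False, True]) (Star (Lit [True, True])))))) (Times (Star (Lit [True, False])) (Lit [True, True]))) (Times (Lit [True]) (Times (Star (Lit [True, True])) (Lit [False, True])))) (Star (Lit [False]))"
| "rs Q11 = Plus (Times (Plus (Lit []) (Plus (Times (Lit [True]) (Times (Star (Lit [False, True])) (Times (Plus (Plus (Plus (Plus (Lit [False, False]) (Times (Lit [False, False]) (Times (Lit [True, True]) (Star (Lit [True, True]))))) (Times (Times (Lit [True, True]) (Star (Lit [True, True]))) (Lit [False, False]))) (Times (Star (Lit [True, True])) (Lit [True, False, True, True]))) (Times (Lit [True, True, False, True]) (Star (Lit [True, True])))) (Times (Star (Lit [True, False])) (Lit [True, True]))))) (Plus (Times (Plus (Lit [False]) (Times (Lit [False]) (Times (Lit [True, True]) (Star (Lit [True, True]))))) (Times (Star (Lit [True, False])) (Lit [True, True]))) (Plus (Times (Lit [True]) (Times (Star (Lit [False, True])) (Times (Star (Lit [True, True])) (Lit [False, True])))) (Lit [True]))))) (Star (Lit [False]))) (Star (Lit [False]))"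
| "rs Q12 = Zero"
| "rs Q13 = Times (Star (Lit [True, False])) (Times (Lit [True, True]) (Star (Lit [False])))"
| "rs Q14 = Plus (Times (Plus (Lit []) (Times (Lit [True, True]) (Star (Lit [True, True])))) (Times (Star (Lit [True, False])) (Times (Lit [True, True]) (Star (Lit [False]))))) (Star (Lit [False]))"
| "rs Q15 = Times (Plus (Times (Star (Lit [False, True])) (Times (Plus (Plus (Plus (Plus (Lit [False, False]) (Times (Lit [False, False]) (Times (Lit [True, True]) (Star (Lit [True, True]))))) (Times (Times (Lit [True, True]) (Star (Lit [True, True]))) (Lit [False, False]))) (Times (Star (Lit [True, True])) (Lit [True, False, True, True]))) (Times (Lit [True, True, False, True]) (Star (Lit [True, True])))) (Times (Star (Lit [True, False])) (Lit [True, True])))) (Plus (Times (Star (Lit [False, True])) (Times (Star (Lit [True, True])) (Lit [False, True]))) (Lit []))) (Star (Lit [False]))"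
| "rs Q16 = Times (Lit [True, True]) (Times (Star (Lit [True, False])) (Times (Lit [True, True]) (Star (Lit [False]))))"
| "rs Q17 = Times (Plus (Times (Plus (Times (Star (Lit [True, True])) (Lit [False, False])) (Plus (Times (Star (Lit [True, True])) (Lit [True, False, True, True])) (Times (Lit [False, True]) (Star (Lit [True, True]))))) (Times (Star (Lit [True, False])) (Lit [True, True]))) (Times (Star (Lit [True, True])) (Lit [False, True]))) (Star (Lit [False]))"
| "rs Q18 = Plus (Times (Lit [False]) (Times (Star (Lit [True, False])) (Times (Lit [True, True]) (Star (Lit [False]))))) (Times (Lit [True]) (Star (Lit [False])))"
| "rs Q19 = Plus (Times (Plus (Times (Lit [True]) (Times (Star (Lit [False, True])) (Times (Plus (Plus (Plus (Plus (Lit [False, False]) (Times (Lit [False, False]) (Times (Lit [True, True]) (Star (Lit [True, True]))))) (Times (Times (Lit [True, True]) (Star (Lit [True, True]))) (Lit [False, False]))) (Times (Star (Lit [True, True])) (Lit [True, False, True, True]))) (Times (Lit [True, True, False, True]) (Star (Lit [True, True])))) (Times (Star (Lit [True, False])) (Lit [True, True]))))) (Plus (Times (Plus (Lit [False]) (Times (Lit [False]) (Times (Lit [True, True]) (Star (Lit [True, True]))))) (Times (Star (Lit [True, False])) (Lit [True, True]))) (Plus (Times (Lit [True]) (Times (Star (Lit [False, True])) (Times (Star (Lit [True, True])) (Lit [False, True])))) (Lit [True])))) (Star (Lit [False]))) (Star (Lit [False]))"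
| "rs Q20 = Times (Lit [True]) (Times (Star (Lit [True, False])) (Times (Lit [True, True]) (Star (Lit [False]))))"
| "rs Q21 = Times (Plus (Times (Plus (Lit [False]) (Times (Lit [True]) (Star (Lit [True, True])))) (Times (Star (Lit [True, False])) (Lit [True, True]))) (Lit [True])) (Star (Lit [False]))"
| "rs Q22 = Times (Plus (Times (Plus (Times (Lit [True]) (Times (Star (Lit [True, True])) (Lit [False, False]))) (Plus (Times (Lit [True]) (Times (Star (Lit [True, True])) (Lit [True, False, True, True]))) (Lit [False, True, True]))) (Times (Star (Lit [True, False])) (Lit [True, True]))) (Times (Lit [True]) (Times (Star (Lit [True, True])) (Lit [False, True])))) (Star (Lit [False]))"
| "rs Q23 = Times (Plus (Times (Star (Lit [True, True])) (Times (Star (Lit [True, False])) (Lit [True, True]))) (Lit [])) (Star (Lit [False]))"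
| "rs Q24 = Times (Plus (Times (Plus (Times (Star (Lit [True, True])) (Lit [False, False])) (Times (Star (Lit [True, True])) (Lit [True, False, True, True]))) (Times (Star (Lit [True, False])) (Lit [True, True]))) (Times (Star (Lit [True, True])) (Lit [False, True]))) (Star (Lit [False]))"
| "rs Q25 = Times (Plus (Times (Lit [True]) (Times (Star (Lit [True, True])) (Times (Star (Lit [True, False])) (Lit [True, True])))) (Plus (Times (Lit [False]) (Times (Star (Lit [True, False])) (Lit [True, True]))) (Lit [True]))) (Star (Lit [False]))"
| "rs Q26 = Times (Plus (Times (Lit [False]) (Times (Star (Lit [True, False])) (Lit [True, True]))) (Lit [True])) (Star (Lit [False]))"

fun dstep :: "st \<Rightarrow> bool \<Rightarrow> st" where
  "dstep Q0 False = Q1"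
| "dstep Q0 True = Q2"
| "dstep Q1 False = Q1"
| "dstep Q1 True = Q3"
| "dstep Q2 False = Q4"
| "dstep Q2 True = Q5"
| "dstep Q3 False = Q4"
| "dstep Q3 True = Q6"
| "dstep Q4 False = Q7"
| "dstep Q4 True = Q8"
| "dstep Q5 False = Q9"
| "dstep Q5 True = Q10"
| "dstep Q6 False = Q11"
| "dstep Q6 True = Q10"
| "dstep Q7 False = Q7"
| "dstep Q7 True = Q12"
| "dstep Q8 False = Q13"
| "dstep Q8 True = Q4"
| "dstep Q9 False = Q14"
| "dstep Q9 True = Q15"
| "dstep Q10 False = Q16"
| "dstep Q10 True = Q17"
| "dstep Q11 False = Q14"
| "dstep Q11 True = Q15"
| "dstep Q12 False = Q12"
| "dstep Q12 True = Q12"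
| "dstep Q13 False = Q12"
| "dstep Q13 True = Q18"
| "dstep Q14 False = Q7"
| "dstep Q14 True = Q8"
| "dstep Q15 False = Q19"
| "dstep Q15 True = Q10"
| "dstep Q16 False = Q12"
| "dstep Q16 True = Q20"
| "dstep Q17 False = Q21"
| "dstep Q17 True = Q22"
| "dstep Q18 False = Q13"
| "dstep Q18 True = Q7"
| "dstep Q19 False = Q14"
| "dstep Q19 True = Q15"
| "dstep Q20 False = Q12"
| "dstep Q20 True = Q13"
| "dstep Q21 False = Q13"
| "dstep Q21 True = Q23"
| "dstep Q22 False = Q16"
| "dstep Q22 True = Q24"
| "dstep Q23 False = Q7"
| "dstep Q23 True = Q25"
| "dstep Q24 False = Q26"
| "dstep Q24 True = Q22"
| "dstep Q25 False = Q13"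
| "dstep Q25 True = Q23"
| "dstep Q26 False = Q13"
| "dstep Q26 True = Q7"

definition allSt :: "st list" where "allSt = [Q0, Q1, Q2, Q3, Q4, Q5, Q6, Q7, Q8, Q9, Q10, Q11, Q12, Q13, Q14, Q15, Q16, Q17, Q18, Q19, Q20, Q21, Q22, Q23, Q24, Q25, Q26]"

fun simF :: "st \<Rightarrow> st list" where
  "simF Q0 = [Q0, Q1]"
| "simF Q1 = [Q1]"
| "simF Q2 = [Q2, Q3, Q9, Q11, Q19]"
| "simF Q3 = [Q3, Q9, Q11, Q19]"
| "simF Q4 = [Q4, Q14, Q23]"
| "simF Q5 = [Q5, Q6, Q15]"
| "simF Q6 = [Q6, Q15]"
| "simF Q7 = [Q2, Q3, Q4, Q6, Q7, Q9, Q11, Q14, Q15, Q19, Q23]"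
| "simF Q8 = [Q8, Q21, Q25]"
| "simF Q9 = [Q3, Q9, Q11, Q19]"
| "simF Q10 = [Q10]"
| "simF Q11 = [Q3, Q9, Q11, Q19]"
| "simF Q12 = [Q0, Q1, Q2, Q3, Q4, Q5, Q6, Q7, Q8, Q9, Q10, Q11, Q12, Q13, Q14, Q15, Q16, Q17, Q18, Q19, Q20, Q21, Q22, Q23, Q24, Q25, Q26]"
| "simF Q13 = [Q1, Q4, Q13, Q14, Q23]"
| "simF Q14 = [Q4, Q14, Q23]"
| "simF Q15 = [Q6, Q15]"
| "simF Q16 = [Q4, Q14, Q16, Q23]"
| "simF Q17 = [Q17]"
| "simF Q18 = [Q0, Q1, Q3, Q8, Q9, Q11, Q18, Q19, Q21, Q25, Q26]"
| "simF Q19 = [Q3, Q9, Q11, Q19]"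
| "simF Q20 = [Q8, Q20, Q21, Q25]"
| "simF Q21 = [Q8, Q21, Q25]"
| "simF Q22 = [Q2, Q3, Q9, Q10, Q11, Q19, Q22]"
| "simF Q23 = [Q4, Q14, Q23]"
| "simF Q24 = [Q0, Q1, Q5, Q6, Q15, Q17, Q24]"
| "simF Q25 = [Q8, Q21, Q25]"
| "simF Q26 = [Q0, Q1, Q3, Q8, Q9, Q11, Q18, Q19, Q21, Q25, Q26]"

fun ttc :: "st \<Rightarrow> nst list list list" where
  "ttc Q0 = [[[Pre Q0]], [], []]"
| "ttc Q1 = [[[M1 False Q3, Pre Q1], [M1 False Q2, Pre Q1]], [], []]"
| "ttc Q2 = [[], [[M1 True Q1, Pre Q2]], []]"
| "ttc Q3 = [[], [[M1 True Q1, M2 False Q4, Pre Q3]], []]"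
| "ttc Q4 = [[], [[M1 False Q6, Pre Q4], [M1 False Q5, Pre Q4]], [[M1 True Q13, M2 True Q7, Post Q4, Pre Q4], [M1 True Q13, M2 True Q7, Post Q4, Post Q12, Post Q14, Pre Q4], [M1 True Q13, M2 True Q7, Post Q4, Post Q12, Pre Q4], [M1 True Q13, M2 True Q7, Post Q4, Post Q14, Pre Q4], [M1 True Q13, M2 True Q7, Post Q14, Pre Q4]]]"
| "ttc Q5 = [[], [], [[M1 True Q4, M2 True Q1, Pre Q5]]]"
| "ttc Q6 = [[], [], [[M1 True Q4, M2 True Q1, Post Q7, Pre Q6]]]"
| "ttc Q7 = [[], [[M1 False Q12, Pre Q7], [M1 False Q8, Pre Q7]], [[M1 False Q25, Post Q7, Post Q12, Pre Q7], [M1 False Q12, Post Q7, Post Q12, Pre Q7], [M1 False Q8, Post Q7, Post Q12, Pre Q7], [M1 True Q13, M2 False Q16, Post Q7, Pre Q7], [M1 False Q12, Post Q7, Pre Q7], [M1 False Q8, Post Q7, Pre Q7], [M1 False Q25, Post Q7, Pre Q7], [M1 True Q13, M2 False Q16, Post Q7, Post Q12, Pre Q7], [M1 True Q13, M2 True Q12, Post Q7, Pre Q7], [M1 True Q13, M2 True Q12, Post Q7, Post Q12, Pre Q7]]]"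
| "ttc Q8 = [[], [], [[M1 True Q7, M2 False Q19, Post Q8, Post Q12, Pre Q8], [M1 True Q7, M2 True Q12, Post Q8, Pre Q8], [M1 True Q7, M2 False Q19, Post Q8, Pre Q8], [M1 True Q7, M2 True Q12, Post Q8, Post Q12, Pre Q8], [M1 True Q7, M2 False Q11, Pre Q8], [M1 True Q7, M2 False Q9, Pre Q8]]]"
| "ttc Q9 = [[], [], [[M1 False Q10, Post Q3, Pre Q9]]]"
| "ttc Q10 = [[], [], [[M1 True Q9, M2 True Q7, Pre Q10], [M1 True Q19, M2 True Q7, Post Q10, Post Q12, Pre Q10], [M1 True Q11, M2 True Q7, Post Q12, Pre Q10]]]"
| "ttc Q11 = [[], [], [[M1 False Q10, Post Q3, Post Q7, Pre Q11]]]"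
| "ttc Q12 = [[], [], [[M1 True Q7, M2 True Q12, Post Q12, Pre Q12], [M1 False Q13, Post Q12, Pre Q12], [M1 True Q12, M2 False Q12, Post Q12, Pre Q12], [M1 False Q12, Post Q12, Pre Q12], [M1 True Q12, M2 True Q12, Post Q12, Pre Q12], [M1 True Q7, M2 False Q12, Post Q12, Pre Q12], [M1 False Q20, Post Q12, Pre Q12], [M1 True Q7, M2 False Q12, Pre Q12], [M1 True Q12, M2 False Q13, Pre Q12], [M1 True Q12, M2 False Q13, Post Q12, Pre Q12], [M1 True Q7, M2 False Q13, Post Q12, Pre Q12], [M1 True Q7, M2 False Q13, Pre Q12], [M1 False Q12, Pre Q12], [M1 True Q12, M2 True Q7, Post Q12, Pre Q12], [M1 False Q18, Post Q12, Pre Q12], [M1 False Q18, Pre Q12], [M1 True Q12, M2 False Q12, Pre Q12]]]"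
| "ttc Q13 = [[], [], [[M1 True Q12, M2 True Q12, Post Q12, Post Q13, Pre Q13], [M1 False Q23, Post Q12, Post Q13, Pre Q13], [M1 False Q7, Post Q12, Post Q13, Pre Q13], [M1 False Q4, Post Q12, Post Q13, Pre Q13], [M1 False Q4, Post Q13, Pre Q13], [M1 False Q23, Post Q13, Pre Q13], [M1 False Q7, Pre Q13], [M1 False Q4, Pre Q13], [M1 False Q7, Post Q13, Pre Q13]]]"
| "ttc Q14 = [[], [], [[M1 False Q15, Post Q4, Pre Q14], [M1 False Q15, Post Q4, Post Q7, Pre Q14], [M1 False Q15, Post Q12, Post Q14, Pre Q14], [M1 False Q15, Post Q14, Pre Q14]]]"
| "ttc Q15 = [[], [], [[M1 True Q14, M2 False Q16, Post Q6, Post Q12, Pre Q15], [M1 True Q14, M2 False Q16, Post Q6, Pre Q15], [M1 True Q14, M2 False Q16, Post Q12, Post Q15, Pre Q15], [M1 True Q14, M2 False Q16, Post Q15, Pre Q15]]]"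
| "ttc Q16 = [[], [], [[M1 False Q24, Post Q12, Pre Q16], [M1 False Q17, Post Q12, Post Q16, Pre Q16], [M1 False Q17, Post Q12, Pre Q16], [M1 False Q24, Post Q12, Post Q16, Pre Q16]]]"
| "ttc Q17 = [[], [], [[M1 True Q16, M2 True Q14, Pre Q17], [M1 True Q16, M2 True Q14, Post Q12, Pre Q17], [M1 True Q16, M2 True Q14, Post Q12, Post Q17, Pre Q17]]]"
| "ttc Q18 = [[], [], [[M1 True Q12, M2 False Q7, Post Q18, Pre Q18], [M1 True Q12, M2 True Q12, Post Q12, Post Q18, Pre Q18], [M1 True Q12, M2 False Q7, Pre Q18], [M1 True Q12, M2 False Q7, Post Q12, Post Q18, Pre Q18]]]"
| "ttc Q19 = [[], [], [[M1 False Q10, Post Q19, Pre Q19], [M1 False Q10, Post Q11, Pre Q19], [M1 False Q10, Post Q12, Post Q19, Pre Q19], [M1 False Q10, Post Q11, Post Q12, Pre Q19]]]"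
| "ttc Q20 = [[], [], [[M1 True Q12, M2 False Q21, Post Q12, Pre Q20], [M1 True Q12, M2 False Q26, Post Q12, Pre Q20], [M1 True Q12, M2 False Q21, Post Q12, Post Q20, Pre Q20], [M1 True Q12, M2 False Q26, Post Q12, Post Q20, Pre Q20]]]"
| "ttc Q21 = [[], [], [[M1 False Q22, Post Q8, Post Q12, Pre Q21], [M1 False Q22, Post Q8, Post Q12, Post Q21, Pre Q21], [M1 False Q22, Post Q8, Pre Q21]]]"
| "ttc Q22 = [[], [], [[M1 True Q21, M2 True Q12, Post Q12, Pre Q22], [M1 True Q21, M2 True Q12, Post Q12, Post Q22, Pre Q22], [M1 True Q26, M2 True Q12, Post Q12, Post Q22, Pre Q22], [M1 True Q26, M2 True Q12, Pre Q22], [M1 True Q26, M2 True Q12, Post Q12, Pre Q22], [M1 True Q21, M2 True Q12, Pre Q22]]]"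
| "ttc Q23 = [[], [], [[M1 True Q13, M2 False Q16, Post Q4, Post Q12, Post Q23, Pre Q23], [M1 True Q13, M2 False Q16, Post Q4, Pre Q23], [M1 True Q13, M2 True Q7, Post Q4, Post Q12, Pre Q23], [M1 True Q13, M2 True Q7, Post Q4, Post Q12, Post Q23, Pre Q23], [M1 True Q13, M2 False Q16, Post Q4, Post Q12, Pre Q23]]]"
| "ttc Q24 = [[], [], [[M1 True Q16, M2 True Q13, Post Q12, Pre Q24], [M1 True Q16, M2 True Q13, Pre Q24], [M1 True Q16, M2 True Q13, Post Q12, Post Q24, Pre Q24]]]"
| "ttc Q25 = [[], [], [[M1 True Q7, M2 True Q12, Post Q8, Post Q12, Post Q25, Pre Q25], [M1 True Q7, M2 True Q12, Post Q8, Post Q12, Pre Q25]]]"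
| "ttc Q26 = [[], [], [[M1 False Q22, Post Q18, Pre Q26], [M1 False Q22, Post Q12, Post Q18, Post Q26, Pre Q26], [M1 False Q22, Post Q12, Post Q18, Pre Q26]]]"

definition dl :: "st \<Rightarrow> bool list \<Rightarrow> st" where "dl q w = foldl dstep q w"
definition fin :: "st \<Rightarrow> bool" where "fin q = nullable (rs q)"

fun nstep :: "nst \<Rightarrow> bool \<Rightarrow> nst list" where
  "nstep (Pre q) a = [Pre (dstep q a), M1 a (dstep q (\<not> a))]"
| "nstep (M1 t q) a = (if a then [M2 t (dstep q False)] else [])"
| "nstep (M2 t q) a = (if a = (\<not> t) then [Post (dstep q t)] else [])"
| "nstep (Post q) a = [Post (dstep q a)]"

fun postfin :: "nst \<Rightarrow> bool" where
  "postfin (Post q) = fin q"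
| "postfin _ = False"

lemma chkA: "\<forall>q\<in>set allSt. deriv False (rs q) = rs (dstep q False) \<and> deriv True (rs q) = rs (dstep q True)"
  by code_simp
lemma chkB: "\<forall>p\<in>set allSt. \<forall>q\<in>set (simF p). (fin p \<longrightarrow> fin q) \<and> dstep q False \<in> set (simF (dstep p False)) \<and> dstep q True \<in> set (simF (dstep p True))"
  by code_simp
lemma chkC: "\<forall>q\<in>set allSt. dl q [True,True,False] \<in> set (simF (dl q [False,False,True])) \<and> dl q [False,True,True] \<in> set (simF (dl q [True,False,False]))"
  by code_simp
lemma chkD: "\<forall>q\<in>set allSt. \<forall>c\<in>set [0,1,2]. \<forall>S\<in>set (ttc q ! c). \<forall>a\<in>set [False,True].
   \<exists>S'\<in>set (ttc (dstep q a) ! min 2 (c + (if a then 1 else 0))). \<forall>x\<in>set S'. x \<in> set (concat (map (\<lambda>s. nstep s a) S))"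
  by code_simp
lemma chkE: "\<forall>q\<in>set allSt. fin q \<longrightarrow> ttc q ! 0 = [] \<and> (\<forall>S\<in>set (ttc q ! 2). \<exists>x\<in>set S. postfin x)"
  by code_simp
lemma chkF: "[Pre Q0] \<in> set (ttc Q0 ! 0) \<and> rs Q0 = R0"
  by code_simp


lemma conc_iff: "x \<in> A \<cdot>\<cdot> B \<longleftrightarrow> (\<exists>u v. x = u @ v \<and> u \<in> A \<and> v \<in> B)"
  unfolding conc_def by blast
lemma conc_empty1[simp]: "{} \<cdot>\<cdot> B = {}" by (auto simp: conc_iff)
lemma conc_empty2[simp]: "A \<cdot>\<cdot> {} = {}" by (auto simp: conc_iff)
lemma conc_unit1[simp]: "{[]} \<cdot>\<cdot> B = B" by (auto simp: conc_iff)
lemma conc_unit2[simp]: "A \<cdot>\<cdot> {[]} = A" by (auto simp: conc_iff)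
lemma conc_assoc: "(A \<cdot>\<cdot> B) \<cdot>\<cdot> C = A \<cdot>\<cdot> (B \<cdot>\<cdot> C)"
  by (auto simp: conc_iff) (metis append_assoc)+
lemma Nil_conc: "[] \<in> A \<cdot>\<cdot> B \<longleftrightarrow> [] \<in> A \<and> [] \<in> B" by (auto simp: conc_iff)
lemma Cons_conc: "a # w \<in> A \<cdot>\<cdot> B \<longleftrightarrow> (\<exists>u v. w = u @ v \<and> a # u \<in> A \<and> v \<in> B) \<or> ([] \<in> A \<and> a # w \<in> B)"
  by (auto simp: conc_iff Cons_eq_append_conv)
lemma Nil_lstar: "[] \<in> lstar A"
  unfolding lstar_def by (auto intro: exI[of _ 0])
lemma Cons_lpow: "a # w \<in> lpow A n \<Longrightarrow> \<exists>u v. w = u @ v \<and> a # u \<in> A \<and> v \<in> lstar A"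
proof (induction n arbitrary: w)
  case 0
  then show ?case by simp
next
  case (Suc n)
  then obtain x y where xy: "a # w = x @ y" "x \<in> A" "y \<in> lpow A n" by (auto simp: conc_iff)
  show ?case
  proof (cases x)
    case Nil
    then show ?thesis using xy Suc.IH by auto
  next
    case (Cons b u)
    then show ?thesis using xy by (auto simp: lstar_def)
  qed
qed
lemma Cons_lstar: "a # w \<in> lstar A \<longleftrightarrow> (\<exists>u v. w = u @ v \<and> a # u \<in> A \<and> v \<in> lstar A)"
proof
  assume "a # w \<in> lstar A"
  then show "\<exists>u v. w = u @ v \<and> a # u \<in> A \<and> v \<in> lstar A"
    unfolding lstar_def using Cons_lpow[of a w A] by (auto simp: lstar_def)
next
  assume "\<exists>u v. w = u @ v \<and> a # u \<in> A \<and> v \<in> lstar A"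
  then obtain u v n where "w = u @ v" "a # u \<in> A" "v \<in> lpow A n" by (auto simp: lstar_def)
  then have "a # w \<in> lpow A (Suc n)" by (simp add: conc_iff) (metis append_Cons)
  then show "a # w \<in> lstar A" unfolding lstar_def by blast
qed

lemma summands_lang: "r \<in> set (summands s) \<Longrightarrow> lang r \<subseteq> lang s"
  by (induction s rule: summands.induct) auto

lemma plus_aux: "lang (if s = Zero then r else if r \<in> set (summands s) then s else Plus r s) = lang r \<union> lang s"
  by (auto dest: summands_lang)

lemma lang_plus: "lang (plus r s) = lang r \<union> lang s"
  apply (induction r s rule: plus.induct)
  apply (simp_all only: plus.simps plus_aux)
  apply auto
  done

lemma lang_times: "lang (times r s) = lang r \<cdot>\<cdot> lang s"
  by (induction r s rule: times.induct) (auto simp: conc_assoc)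

lemma nullable_iff: "nullable r \<longleftrightarrow> [] \<in> lang r"
  by (induction r) (auto simp: Nil_conc Nil_lstar)

lemma lang_deriv: "w \<in> lang (deriv a r) \<longleftrightarrow> a # w \<in> lang r"
proof (induction r arbitrary: w)
  case (Lit x)
  then show ?case by (cases x) auto
next
  case (Times r s)
  show ?case
    using Times.IH by (auto simp: lang_plus lang_times nullable_iff Cons_conc conc_iff Cons_eq_append_conv)
next
  case (Star r)
  show ?case using Star.IH by (auto simp: lang_times Cons_lstar conc_iff)
qed (auto simp: lang_plus)

lemma allSt: "q \<in> set allSt" by (cases q) (simp_all add: allSt_def)

lemma dl_Cons[simp]: "dl q (a # w) = dl (dstep q a) w" by (simp add: dl_def)
lemma dl_Nil[simp]: "dl q [] = q" by (simp add: dl_def)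
lemma dl_append: "dl q (u @ v) = dl (dl q u) v" by (simp add: dl_def)

lemma link: "w \<in> lang (rs q) \<longleftrightarrow> fin (dl q w)"
proof (induction w arbitrary: q)
  case Nil
  then show ?case by (simp add: fin_def nullable_iff)
next
  case (Cons a w)
  have "deriv a (rs q) = rs (dstep q a)" using chkA allSt[of q] by (cases a) auto
  then show ?case using Cons.IH lang_deriv[of w a "rs q"] by simp
qed


lemma lang_R0: "lang R0 = lstar (lit ''0'') \<cdot>\<cdot> PegL \<cdot>\<cdot> lstar (lit ''0'')"
  by (simp add: R0_def PegL_def lit_def wd_def lplus_def)

lemma X_iff: "w \<in> lstar (lit ''0'') \<cdot>\<cdot> PegL \<cdot>\<cdot> lstar (lit ''0'') \<longleftrightarrow> fin (dl Q0 w)"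
proof -
  have "rs Q0 = R0" using chkF by blast
  then show ?thesis using link[of w Q0] lang_R0 by (simp only:)
qed

lemma sim_ok: "q \<in> set (simF p) \<Longrightarrow> fin (dl p v) \<Longrightarrow> fin (dl q v)"
proof (induction v arbitrary: p q)
  case Nil
  then show ?case using chkB allSt[of p] by auto
next
  case (Cons a v)
  have "dstep q a \<in> set (simF (dstep p a))" using chkB allSt[of p] Cons.prems(1) by (cases a) auto
  then show ?case using Cons by simp
qed

lemma inv_hop1:
  assumes "w = u @ p @ v" "w' = u @ p' @ v" "fin (dl Q0 w')"
    and "dl (dl Q0 u) p \<in> set (simF (dl (dl Q0 u) p'))"
  shows "fin (dl Q0 w)"
proof -
  have 1: "dl Q0 w = dl (dl (dl Q0 u) p) v" using assms(1) by (simp add: dl_def)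
  have 2: "dl Q0 w' = dl (dl (dl Q0 u) p') v" using assms(2) by (simp add: dl_def)
  show ?thesis using sim_ok[OF assms(4)] assms(3) 1 2 by simp
qed

lemma inv_hop: "hop w w' \<Longrightarrow> fin (dl Q0 w') \<Longrightarrow> fin (dl Q0 w)"
  unfolding hop_def
proof (elim exE disjE conjE)
  fix u v
  assume a: "w = u @ [True, True, False] @ v" "w' = u @ [False, False, True] @ v" "fin (dl Q0 w')"
  have "dl (dl Q0 u) [True, True, False] \<in> set (simF (dl (dl Q0 u) [False, False, True]))"
    using chkC allSt[of "dl Q0 u"] by blast
  then show "fin (dl Q0 w)" using inv_hop1[OF a] by blast
next
  fix u v
  assume a: "w = u @ [False, True, True] @ v" "w' = u @ [True, False, False] @ v" "fin (dl Q0 w')"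
  have "dl (dl Q0 u) [False, True, True] \<in> set (simF (dl (dl Q0 u) [True, False, False]))"
    using chkC allSt[of "dl Q0 u"] by blast
  then show "fin (dl Q0 w)" using inv_hop1[OF a] by blast
qed

lemma inv_hops: "hop\<^sup>*\<^sup>* w w' \<Longrightarrow> fin (dl Q0 w') \<Longrightarrow> fin (dl Q0 w)"
  by (induction rule: rtranclp_induct) (auto dest: inv_hop)

lemma hop_pegs: "hop w w' \<Longrightarrow> Suc (pegs w') = pegs w"
  unfolding hop_def pegs_def by auto

lemma one_peg: "pegs w = Suc 0 \<Longrightarrow> \<exists>a b. w = replicate a False @ True # replicate b False"
proof (induction w)
  case Nil
  then show ?case by (simp add: pegs_def)
next
  case (Cons x w)
  show ?case
  proof (cases x)
    case True
    then have "filter id w = []" using Cons.prems by (simp add: pegs_def)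
    then have "w = replicate (length w) False"
      by (metis (full_types) filter_empty_conv id_apply replicate_length_same)
    then have "x # w = replicate 0 False @ True # replicate (length w) False" using True by simp
    then show ?thesis by blast
  next
    case False
    then obtain a b where "w = replicate a False @ True # replicate b False" using Cons by (auto simp: pegs_def)
    then have "x # w = replicate (Suc a) False @ True # replicate b False" using False by simp
    then show ?thesis by blast
  qed
qed

lemma rep0_lpow: "replicate n False \<in> lpow (lit ''0'') n"
  by (induction n) (auto simp: conc_iff lit_def wd_def)

lemma rep0_lstar: "replicate n False \<in> lstar (lit ''0'')"
  using rep0_lpow unfolding lstar_def by blast

lemma one_peg_X: "pegs w = Suc 0 \<Longrightarrow> w \<in> lstar (lit ''0'') \<cdot>\<cdot> PegL \<cdot>\<cdot> lstar (lit ''0'')"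
proof -
  assume "pegs w = Suc 0"
  then obtain a b where w: "w = replicate a False @ [True] @ replicate b False" using one_peg by fastforce
  have "[True] \<in> PegL" by (simp add: PegL_def lit_def wd_def)
  then show ?thesis unfolding w conc_iff using rep0_lstar by blast
qed


definition nsteps :: "nst set \<Rightarrow> bool list \<Rightarrow> nst set" where
  "nsteps S w = foldl (\<lambda>S a. \<Union>s\<in>S. set (nstep s a)) S w"

lemma nsteps_snoc: "nsteps S (w @ [a]) = (\<Union>s\<in>nsteps S w. set (nstep s a))"
  by (simp add: nsteps_def)
lemma nsteps_Nil: "nsteps S [] = S"
  by (simp add: nsteps_def)
lemma dl_snoc: "dl q (w @ [a]) = dstep (dl q w) a"
  by (simp add: dl_def)

lemma hop_snoc: "hop w w' \<Longrightarrow> hop (w @ [a]) (w' @ [a])"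
  unfolding hop_def by fastforce

lemma nsound: "x \<in> nsteps {Pre q0} w \<Longrightarrow>
  (case x of Pre q \<Rightarrow> q = dl q0 w
   | M1 t q \<Rightarrow> (\<exists>u. w = u @ [t] \<and> q = dl q0 (u @ [\<not> t]))
   | M2 t q \<Rightarrow> (\<exists>u. w = u @ [t, True] \<and> q = dl q0 (u @ [\<not> t, False]))
   | Post q \<Rightarrow> (\<exists>w'. hop w w' \<and> q = dl q0 w'))"
proof (induction w arbitrary: x rule: rev_induct)
  case Nil
  then show ?case by (simp add: nsteps_Nil)
next
  case (snoc a w)
  then obtain s where s: "s \<in> nsteps {Pre q0} w" "x \<in> set (nstep s a)" by (auto simp: nsteps_snoc)
  note IH = snoc.IH[OF s(1)]
  show ?case
  proof (cases s)
    case (Pre q)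
    then show ?thesis using s(2) IH by (auto simp: dl_snoc)
  next
    case (M1 t q)
    then show ?thesis using s(2) IH by (cases a) (auto simp: dl_def)
  next
    case (M2 t q)
    then obtain u where u: "w = u @ [t, True]" "q = dl q0 (u @ [\<not> t, False])" using IH by auto
    have a: "a = (\<not> t)" and x: "x = Post (dstep q t)" using s(2) M2 by (auto split: if_splits)
    have "hop (w @ [a]) (u @ [\<not> t, False, t])"
      unfolding hop_def u a by (cases t) auto
    moreover have "dstep q t = dl q0 (u @ [\<not> t, False, t])"
      using u(2) dl_snoc[of q0 "u @ [\<not> t, False]" t] by simp
    ultimately show ?thesis using x by auto
  next
    case (Post q)
    then obtain w' where "hop w w'" "q = dl q0 w'" using IH by auto
    then show ?thesis using s(2) Post by (auto simp: dl_snoc intro!: exI[of _ "w' @ [a]"] hop_snoc)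
  qed
qed

lemma ninv: "\<exists>S\<in>set (ttc (dl Q0 w) ! min 2 (pegs w)). set S \<subseteq> nsteps {Pre Q0} w"
proof (induction w rule: rev_induct)
  case Nil
  then show ?case using chkF by (auto simp: pegs_def nsteps_Nil)
next
  case (snoc a w)
  then obtain S where S: "S \<in> set (ttc (dl Q0 w) ! min 2 (pegs w))" "set S \<subseteq> nsteps {Pre Q0} w" by blast
  have c: "min 2 (pegs w) \<in> set [0,1,2]" by auto
  have a: "a \<in> set [False,True]" by (cases a) auto
  have "\<exists>S'\<in>set (ttc (dstep (dl Q0 w) a) ! min 2 (min 2 (pegs w) + (if a then 1 else 0))).
      \<forall>x\<in>set S'. x \<in> set (concat (map (\<lambda>s. nstep s a) S))"
    using chkD allSt[of "dl Q0 w"] c S(1) a by blast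
  then obtain S' where S': "S' \<in> set (ttc (dstep (dl Q0 w) a) ! min 2 (min 2 (pegs w) + (if a then 1 else 0)))"
      "\<forall>x\<in>set S'. x \<in> set (concat (map (\<lambda>s. nstep s a) S))" by blast
  have e1: "min 2 (min 2 (pegs w) + (if a then 1 else 0)) = min 2 (pegs (w @ [a]))"
    by (cases a) (auto simp: pegs_def min_def)
  have e2: "dstep (dl Q0 w) a = dl Q0 (w @ [a])" by (simp add: dl_snoc)
  have "set S' \<subseteq> nsteps {Pre Q0} (w @ [a])" using S'(2) S(2) by (auto simp: nsteps_snoc)
  then show ?case using S'(1) e1 e2 by auto
qed

lemma fwd: "fin (dl Q0 w) \<Longrightarrow> 1 \<le> pegs w \<and> (2 \<le> pegs w \<longrightarrow> (\<exists>w'. hop w w' \<and> fin (dl Q0 w')))"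
proof -
  assume f: "fin (dl Q0 w)"
  obtain S where S: "S \<in> set (ttc (dl Q0 w) ! min 2 (pegs w))" "set S \<subseteq> nsteps {Pre Q0} w"
    using ninv by blast
  have e: "ttc (dl Q0 w) ! 0 = [] \<and> (\<forall>S\<in>set (ttc (dl Q0 w) ! 2). \<exists>x\<in>set S. postfin x)"
    using chkE allSt[of "dl Q0 w"] f by blast
  have "pegs w \<noteq> 0"
  proof
    assume "pegs w = 0"
    then show False using S(1) e by simp
  qed
  moreover have "\<exists>w'. hop w w' \<and> fin (dl Q0 w')" if "2 \<le> pegs w"
  proof -
    have "min 2 (pegs w) = 2" using that by simp
    then obtain x where hx: "x \<in> set S" "postfin x" using e S(1) by auto
    from hx(2) obtain q where q: "x = Post q" "fin q" by (cases x) auto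
    have "x \<in> nsteps {Pre Q0} w" using hx(1) S(2) by blast
    from nsound[OF this] q show ?thesis by auto
  qed
  ultimately show ?thesis by auto
qed

lemma red: "fin (dl Q0 w) \<Longrightarrow> reducible_to_one w"
proof (induction "pegs w" arbitrary: w rule: less_induct)
  case less
  from fwd[OF less.prems] have 1: "1 \<le> pegs w" and 2: "2 \<le> pegs w \<longrightarrow> (\<exists>w'. hop w w' \<and> fin (dl Q0 w'))"
    by auto
  show ?case
  proof (cases "pegs w = 1")
    case True
    then show ?thesis unfolding reducible_to_one_def by blast
  next
    case False
    then have "2 \<le> pegs w" using 1 by simp
    then obtain w' where w': "hop w w'" "fin (dl Q0 w')" using 2 by blast
    have "pegs w' < pegs w" using hop_pegs[OF w'(1)] by simp
    then have "reducible_to_one w'" using less.hyps w'(2) by blast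
    then obtain w'' where "hop\<^sup>*\<^sup>* w' w''" "pegs w'' = 1" unfolding reducible_to_one_def by blast
    then show ?thesis unfolding reducible_to_one_def using w'(1) by (meson converse_rtranclp_into_rtranclp)
  qed
qed

theorem theorem1:
  fixes w :: "bool list"
  shows "reducible_to_one w \<longleftrightarrow> w \<in> lstar (lit ''0'') \<cdot>\<cdot> PegL \<cdot>\<cdot> lstar (lit ''0'')"
proof
  assume "reducible_to_one w"
  then obtain w' where w': "hop\<^sup>*\<^sup>* w w'" "pegs w' = 1" unfolding reducible_to_one_def by blast
  then have "fin (dl Q0 w')" using one_peg_X X_iff by simp
  then have "fin (dl Q0 w)" using inv_hops w'(1) by blast
  then show "w \<in> lstar (lit ''0'') \<cdot>\<cdot> PegL \<cdot>\<cdot> lstar (lit ''0'')" using X_iff by blast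
next
  assume "w \<in> lstar (lit ''0'') \<cdot>\<cdot> PegL \<cdot>\<cdot> lstar (lit ''0'')"
  then have "fin (dl Q0 w)" using X_iff by blast
  then show "reducible_to_one w" by (rule red)
qed

end
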